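(* Consider a finite reward-free MDP with occupancy polytope $\Phi$, let $d_e\in\Phi$, and let $F_e$ be the minimal face of $\Phi$ containing $d_e$. For any $r\in\mathcal R(d_e)$, the optimal occupancy set $\Phi^\star(r):=\arg\max_{d\in\Phi}r^\top d$ is an exposed face of $\Phi$ containing $d_e$. Moreover, if $r\in\mathrm{relint}(\mathcal R(d_e))$, then $\Phi^\star(r)=F_e$.
   Context: The MDP has finite $S$, $A$, transitions $P$, initial distribution $\mu_0$, discount $\gamma\in(0,1)$; $(Md)(s)=\sum_a d(s,a)-\gamma\sum_{s',a'}P(s\mid s',a')d(s',a')$ and $\Phi=\{d\ge0:Md=(1-\gamma)\mu_0\}$ (a polytope). Rewards are $r\in\Delta(S\times A)$ (probability simplex). $\mathrm{subopt}(r,d):=\max_{\tilde d\in\Phi}r^\top\tilde d-r^\top d$ and $\mathcal R(d_e):=\{r\in\Delta(S\times A):\mathrm{subopt}(r,d_e)=0\}$. $\mathrm{relint}$ denotes relative interior. *)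

theory Defs
  imports "HOL-Analysis.Analysis"
begin

text \<open>Occupancy measures / rewards are vectors in real^(S x A) for finite types S, A.
  P s s' a' is the transition probability P(s | s', a').\<close>

definition flow_op ::
  "('s::finite \<Rightarrow> 's \<Rightarrow> 'a::finite \<Rightarrow> real) \<Rightarrow> real \<Rightarrow> real ^ ('s \<times> 'a) \<Rightarrow> 's \<Rightarrow> real" where
  "flow_op P \<gamma> d s = (\<Sum>a\<in>UNIV. d $ (s, a)) - \<gamma> * (\<Sum>p\<in>UNIV. P s (fst p) (snd p) * d $ p)"

definition occ_polytope ::
  "('s::finite \<Rightarrow> 's \<Rightarrow> 'a::finite \<Rightarrow> real) \<Rightarrow> ('s \<Rightarrow> real) \<Rightarrow> real \<Rightarrow> (real ^ ('s \<times> 'a)) set" where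
  "occ_polytope P \<mu>0 \<gamma> = {d. (\<forall>i. 0 \<le> d $ i) \<and> (\<forall>s. flow_op P \<gamma> d s = (1 - \<gamma>) * \<mu>0 s)}"

definition reward_simplex :: "(real ^ 'n::finite) set" where
  "reward_simplex = {r. (\<forall>i. 0 \<le> r $ i) \<and> (\<Sum>i\<in>UNIV. r $ i) = 1}"

definition subopt :: "(real ^ 'n::finite) set \<Rightarrow> real ^ 'n \<Rightarrow> real ^ 'n \<Rightarrow> real" where
  "subopt \<Phi> r d = (SUP d'\<in>\<Phi>. r \<bullet> d') - r \<bullet> d"

definition feasible_rewards :: "(real ^ 'n::finite) set \<Rightarrow> real ^ 'n \<Rightarrow> (real ^ 'n) set" where
  "feasible_rewards \<Phi> de = {r \<in> reward_simplex. subopt \<Phi> r de = 0}"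

definition opt_set :: "(real ^ 'n::finite) set \<Rightarrow> real ^ 'n \<Rightarrow> (real ^ 'n) set" where
  "opt_set \<Phi> r = {d \<in> \<Phi>. \<forall>d'\<in>\<Phi>. r \<bullet> d' \<le> r \<bullet> d}"

definition minimal_face_containing :: "'v::real_vector set \<Rightarrow> 'v \<Rightarrow> 'v set \<Rightarrow> bool" where
  "minimal_face_containing S x F \<longleftrightarrow>
     F face_of S \<and> x \<in> F \<and> (\<forall>G. G face_of S \<and> x \<in> G \<longrightarrow> F \<subseteq> G)"

end

theory Submission imports Defs begin

lemma sum_pairs: "(\<Sum>p\<in>(UNIV::('s::finite\<times>'a::finite) set). f p) = (\<Sum>s\<in>UNIV. \<Sum>a\<in>UNIV. f (s,a))"
proof -
  have "(\<Sum>s\<in>UNIV. \<Sum>a\<in>UNIV. f (s,a)) = (\<Sum>p\<in>(UNIV::'s set)\<times>(UNIV::'a set). f p)"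
    using sum.cartesian_product[of "\<lambda>s a. f (s,a)" UNIV UNIV] by simp
  then show ?thesis by (simp add: UNIV_Times_UNIV)
qed

lemma flow_inner:
  fixes P :: "'s::finite \<Rightarrow> 's \<Rightarrow> 'a::finite \<Rightarrow> real"
  shows "flow_op P \<gamma> d s = (\<chi> p. (if fst p = s then 1 else 0) - \<gamma> * P s (fst p) (snd p)) \<bullet> d"
proof -
  have e: "\<And>sa. (\<Sum>a\<in>UNIV. (if sa = s then 1 else 0) * d$(sa,a)) = (if sa = s then (\<Sum>a\<in>UNIV. d$(sa,a)) else 0)"
    by simp
  have "(\<Sum>p\<in>UNIV. (if fst p = s then 1 else 0) * d$p) = (\<Sum>a\<in>UNIV. d$(s,a))"
    unfolding sum_pairs fst_conv e by simp
  then show ?thesis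
    unfolding flow_op_def inner_vec_def
    by (simp add: algebra_simps sum_subtractf sum_distrib_left)
qed

lemma subopt_char:
  fixes \<Phi> :: "(real^'n::finite) set"
  assumes nonneg: "\<forall>d\<in>\<Phi>. \<forall>i. 0 \<le> d$i" and sum1: "\<forall>d\<in>\<Phi>. (\<Sum>i\<in>UNIV. d$i) = 1"
    and de: "de \<in> \<Phi>" and r: "r \<in> reward_simplex"
  shows "subopt \<Phi> r de = 0 \<longleftrightarrow> (\<forall>d\<in>\<Phi>. r \<bullet> d \<le> r \<bullet> de)"
proof -
  have bd: "r \<bullet> d \<le> 1" if "d \<in> \<Phi>" for d
  proof -
    have "r \<bullet> d = (\<Sum>i\<in>UNIV. r$i * d$i)" by (simp add: inner_vec_def)
    also have "\<dots> \<le> (\<Sum>i\<in>UNIV. 1 * d$i)"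
    proof (rule sum_mono)
      fix i
      have "r$i \<le> (\<Sum>j\<in>UNIV. r$j)"
        using r by (intro member_le_sum) (auto simp: reward_simplex_def)
      then have "r$i \<le> 1" using r by (simp add: reward_simplex_def)
      then show "r$i * d$i \<le> 1 * d$i" using nonneg that by (intro mult_right_mono) auto
    qed
    also have "\<dots> = 1" using sum1 that by simp
    finally show ?thesis .
  qed
  have bdd: "bdd_above ((\<lambda>d. r \<bullet> d) ` \<Phi>)" by (rule bdd_aboveI[of _ 1]) (auto simp: bd)
  show ?thesis
  proof
    assume "subopt \<Phi> r de = 0"
    then have S: "(SUP d'\<in>\<Phi>. r \<bullet> d') = r \<bullet> de" by (simp add: subopt_def)
    show "\<forall>d\<in>\<Phi>. r \<bullet> d \<le> r \<bullet> de"
      using cSUP_upper[OF _ bdd] S by metis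
  next
    assume H: "\<forall>d\<in>\<Phi>. r \<bullet> d \<le> r \<bullet> de"
    have "(SUP d'\<in>\<Phi>. r \<bullet> d') \<le> r \<bullet> de" using de H by (intro cSUP_least) auto
    moreover have "r \<bullet> de \<le> (SUP d'\<in>\<Phi>. r \<bullet> d')" using cSUP_upper[OF de bdd] .
    ultimately show "subopt \<Phi> r de = 0" by (simp add: subopt_def)
  qed
qed

lemma abstract_main:
  fixes \<Phi> :: "(real^'n::finite) set"
  assumes nonneg: "\<forall>d\<in>\<Phi>. \<forall>i. 0 \<le> d$i" and sum1: "\<forall>d\<in>\<Phi>. (\<Sum>i\<in>UNIV. d$i) = 1"
    and poly: "polyhedron \<Phi>"
    and de: "de \<in> \<Phi>" and Fe: "minimal_face_containing \<Phi> de Fe"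
  shows "(\<forall>r\<in>feasible_rewards \<Phi> de. opt_set \<Phi> r exposed_face_of \<Phi> \<and> de \<in> opt_set \<Phi> r)
       \<and> (\<forall>r\<in>rel_interior (feasible_rewards \<Phi> de). opt_set \<Phi> r = Fe)"
proof -
  have cvx: "convex \<Phi>" using poly by (rule polyhedron_imp_convex)
  have feas: "r \<in> feasible_rewards \<Phi> de \<longleftrightarrow> r \<in> reward_simplex \<and> (\<forall>d\<in>\<Phi>. r \<bullet> d \<le> r \<bullet> de)" for r
    using subopt_char[OF nonneg sum1 de] by (auto simp: feasible_rewards_def)
  have optEq: "opt_set \<Phi> r = \<Phi> \<inter> {x. r \<bullet> x = r \<bullet> de}" if "\<forall>d\<in>\<Phi>. r \<bullet> d \<le> r \<bullet> de" for r
    using that de by (auto simp: opt_set_def intro: antisym)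
  have P1: "opt_set \<Phi> r exposed_face_of \<Phi> \<and> de \<in> opt_set \<Phi> r" if "r \<in> feasible_rewards \<Phi> de" for r
  proof -
    have H: "\<forall>d\<in>\<Phi>. r \<bullet> d \<le> r \<bullet> de" using that feas by blast
    show ?thesis unfolding optEq[OF H]
      using exposed_face_of_Int_supporting_hyperplane_le[OF cvx, of r "r \<bullet> de"] H de by auto
  qed
  have FeF: "Fe face_of \<Phi>" "de \<in> Fe" and Femin: "\<And>G. G face_of \<Phi> \<Longrightarrow> de \<in> G \<Longrightarrow> Fe \<subseteq> G"
    using Fe by (auto simp: minimal_face_containing_def)
  have "Fe exposed_face_of \<Phi>" using FeF exposed_face_of_polyhedron[OF poly] by blast
  then obtain a b where ab: "\<Phi> \<subseteq> {x. a \<bullet> x \<le> b}" "Fe = \<Phi> \<inter> {x. a \<bullet> x = b}"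
    by (auto simp: exposed_face_of_def)
  have P2: "opt_set \<Phi> r = Fe" if rI: "r \<in> rel_interior (feasible_rewards \<Phi> de)" for r
  proof
    have rF: "r \<in> feasible_rewards \<Phi> de" using rI rel_interior_subset by blast
    from P1[OF rF] have "opt_set \<Phi> r face_of \<Phi>" "de \<in> opt_set \<Phi> r"
      by (auto simp: exposed_face_of_def)
    then show "Fe \<subseteq> opt_set \<Phi> r" using Femin by blast
    show "opt_set \<Phi> r \<subseteq> Fe"
    proof
      fix d assume dO: "d \<in> opt_set \<Phi> r"
      show "d \<in> Fe"
      proof (rule ccontr)
        assume nF: "d \<notin> Fe"
        have dP: "d \<in> \<Phi>" using dO by (simp add: opt_set_def)
        have bde: "a \<bullet> de = b" using FeF ab by auto
        have ad: "a \<bullet> d < b" using nF dP ab by fastforce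
        define c where "c = 1 + (\<Sum>i\<in>UNIV. \<bar>a$i\<bar>)"
        define a' where "a' = a + (\<chi> i. c)"
        have a'pos: "a'$i \<ge> 1" for i
        proof -
          have "\<bar>a$i\<bar> \<le> (\<Sum>i\<in>UNIV. \<bar>a$i\<bar>)" by (intro member_le_sum) auto
          then show ?thesis unfolding a'_def c_def by simp
        qed
        define s where "s = (\<Sum>i\<in>UNIV. a'$i)"
        have spos: "s > 0"
        proof -
          have "(\<Sum>i\<in>(UNIV::'n set). (1::real)) \<le> s" unfolding s_def using a'pos by (intro sum_mono) auto
          moreover have "(\<Sum>i\<in>(UNIV::'n set). (1::real)) > 0" by simp
          ultimately show ?thesis by linarith
        qed
        define r' where "r' = (1/s) *\<^sub>R a'"
        have r'x: "r' \<bullet> x = (a \<bullet> x + c) / s" if "x \<in> \<Phi>" for x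
        proof -
          have "(\<chi> i. c) \<bullet> x = c * (\<Sum>i\<in>UNIV. x$i)" by (simp add: inner_vec_def sum_distrib_left)
          then have "(\<chi> i. c) \<bullet> x = c" using sum1 that by simp
          then show ?thesis unfolding r'_def a'_def by (simp add: inner_add_left divide_inverse)
        qed
        have r'nn: "0 \<le> r'$i" for i
        proof -
          have "0 \<le> a'$i" using a'pos[of i] by linarith
          then show ?thesis unfolding r'_def using spos by simp
        qed
        have r'sum: "(\<Sum>i\<in>UNIV. r'$i) = 1"
          unfolding r'_def using spos by (simp add: sum_divide_distrib[symmetric] s_def)
        have r'S: "r' \<in> reward_simplex"
          unfolding reward_simplex_def using r'nn r'sum by simp
        have r'F: "r' \<in> feasible_rewards \<Phi> de"
          unfolding feas using r'S
        proof (intro conjI ballI)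
          fix x assume xP: "x \<in> \<Phi>"
          have "a \<bullet> x \<le> b" using ab xP by auto
          then show "r' \<bullet> x \<le> r' \<bullet> de" using r'x[OF de] r'x[OF xP] bde spos
            by (simp add: divide_right_mono)
        qed (simp)
        have lt: "r' \<bullet> d < r' \<bullet> de" using r'x[OF dP] r'x[OF de] ad bde spos
          by (simp add: divide_strict_right_mono)
        obtain e where e: "e > 0" "ball r e \<inter> affine hull (feasible_rewards \<Phi> de) \<subseteq> feasible_rewards \<Phi> de"
          using rI mem_rel_interior_ball by blast
        define t where "t = e / (2 * (norm (r - r') + 1))"
        have np: "0 < norm (r - r') + 1" using norm_ge_zero[of "r - r'"] by linarith
        have tpos: "t > 0" unfolding t_def using e np by (intro divide_pos_pos) auto
        define rt where "rt = (1 + t) *\<^sub>R r + (- t) *\<^sub>R r'"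
        have "rt \<in> affine hull (feasible_rewards \<Phi> de)"
          unfolding rt_def using rF r'F
          by (intro mem_affine affine_affine_hull) (auto intro: hull_inc)
        moreover have "rt \<in> ball r e"
        proof -
          have "r - rt = t *\<^sub>R (r' - r)" unfolding rt_def by (simp add: algebra_simps)
          then have "dist r rt = norm (t *\<^sub>R (r' - r))" by (simp add: dist_norm)
          also have "\<dots> = t * norm (r - r')" using tpos by (simp add: norm_minus_commute)
          also have "\<dots> < e"
          proof -
            have "t * norm (r - r') \<le> t * (norm (r - r') + 1)" using tpos by simp
            also have "\<dots> = e / 2" unfolding t_def using np by (simp add: field_simps)
            finally show ?thesis using e by linarith
          qed
          finally show ?thesis by simp
        qed
        ultimately have rtF: "rt \<in> feasible_rewards \<Phi> de" using e by blast
        have "rt \<bullet> d \<le> rt \<bullet> de" using rtF dP feas by blast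
        moreover have "r \<bullet> d = r \<bullet> de"
        proof (rule antisym)
          show "r \<bullet> d \<le> r \<bullet> de" using rF feas dP by blast
          show "r \<bullet> de \<le> r \<bullet> d" using dO de by (auto simp: opt_set_def)
        qed
        ultimately have "t * (r' \<bullet> de) \<le> t * (r' \<bullet> d)"
          unfolding rt_def by (simp add: inner_add_left algebra_simps)
        then have "r' \<bullet> de \<le> r' \<bullet> d" using tpos by simp
        with lt show False by simp
      qed
    qed
  qed
  show ?thesis using P1 P2 by blast
qed

lemma occ_sum1:
  fixes P :: "'s::finite \<Rightarrow> 's \<Rightarrow> 'a::finite \<Rightarrow> real"
  assumes P_sum: "\<forall>s' a. (\<Sum>s\<in>UNIV. P s s' a) = 1"
    and mu_sum: "(\<Sum>s\<in>UNIV. \<mu>0 s) = 1" and g: "\<gamma> < 1"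
    and d: "d \<in> occ_polytope P \<mu>0 \<gamma>"
  shows "(\<Sum>i\<in>UNIV. d$i) = 1"
proof -
  have fl: "\<And>s. flow_op P \<gamma> d s = (1 - \<gamma>) * \<mu>0 s" using d by (simp add: occ_polytope_def)
  have "(\<Sum>s\<in>UNIV. flow_op P \<gamma> d s) = (\<Sum>s\<in>UNIV. (1 - \<gamma>) * \<mu>0 s)" using fl by simp
  also have "\<dots> = 1 - \<gamma>" using mu_sum by (simp add: sum_distrib_left[symmetric])
  finally have A: "(\<Sum>s\<in>UNIV. flow_op P \<gamma> d s) = 1 - \<gamma>" .
  have B: "(\<Sum>s\<in>UNIV. \<Sum>p\<in>UNIV. P s (fst p) (snd p) * d $ p) = (\<Sum>p\<in>UNIV. d$p)"
  proof -
    have "(\<Sum>s\<in>UNIV. \<Sum>p\<in>UNIV. P s (fst p) (snd p) * d $ p) = (\<Sum>p\<in>UNIV. \<Sum>s\<in>UNIV. P s (fst p) (snd p) * d $ p)"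
      by (rule sum.swap)
    also have "\<dots> = (\<Sum>p\<in>UNIV. (\<Sum>s\<in>UNIV. P s (fst p) (snd p)) * d $ p)"
      by (simp add: sum_distrib_right)
    also have "\<dots> = (\<Sum>p\<in>UNIV. d$p)" using P_sum by simp
    finally show ?thesis .
  qed
  have "(\<Sum>s\<in>UNIV. flow_op P \<gamma> d s) = (\<Sum>p\<in>UNIV. d$p) - \<gamma> * (\<Sum>p\<in>UNIV. d$p)"
    unfolding flow_op_def using B
    by (simp add: sum_subtractf sum_distrib_left[symmetric] sum_pairs[symmetric])
  with A have "(1 - \<gamma>) * (\<Sum>p\<in>UNIV. d$p) = (1 - \<gamma>) * 1" by (simp add: algebra_simps)
  with g show ?thesis by simp
qed

lemma occ_polyhedron:
  fixes P :: "'s::finite \<Rightarrow> 's \<Rightarrow> 'a::finite \<Rightarrow> real"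
  shows "polyhedron (occ_polytope P \<mu>0 \<gamma>)"
proof -
  have eq: "occ_polytope P \<mu>0 \<gamma> = \<Inter>(range (\<lambda>i. {x. axis i 1 \<bullet> x \<ge> 0})) \<inter>
     \<Inter>(range (\<lambda>s. {x. (\<chi> p. (if fst p = s then 1 else 0) - \<gamma> * P s (fst p) (snd p)) \<bullet> x = (1-\<gamma>) * \<mu>0 s}))"
    unfolding occ_polytope_def flow_inner[symmetric] by (auto simp: inner_axis')
  show ?thesis unfolding eq
    by (intro polyhedron_Int polyhedron_Inter) (auto intro: polyhedron_halfspace_ge polyhedron_hyperplane)
qed

theorem mainTheorem7:
  fixes P :: "'s::finite \<Rightarrow> 's \<Rightarrow> 'a::finite \<Rightarrow> real"
    and \<mu>0 :: "'s \<Rightarrow> real" and \<gamma> :: real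
    and de :: "real ^ ('s \<times> 'a)" and Fe :: "(real ^ ('s \<times> 'a)) set"
  assumes P_nonneg: "\<forall>s s' a. 0 \<le> P s s' a"
    and P_sum: "\<forall>s' a. (\<Sum>s\<in>UNIV. P s s' a) = 1"
    and mu_nonneg: "\<forall>s. 0 \<le> \<mu>0 s"
    and mu_sum: "(\<Sum>s\<in>UNIV. \<mu>0 s) = 1"
    and gamma: "0 < \<gamma>" "\<gamma> < 1"
    and de: "de \<in> occ_polytope P \<mu>0 \<gamma>"
    and Fe: "minimal_face_containing (occ_polytope P \<mu>0 \<gamma>) de Fe"
  shows "(\<forall>r\<in>feasible_rewards (occ_polytope P \<mu>0 \<gamma>) de.
            opt_set (occ_polytope P \<mu>0 \<gamma>) r exposed_face_of (occ_polytope P \<mu>0 \<gamma>)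
            \<and> de \<in> opt_set (occ_polytope P \<mu>0 \<gamma>) r)
       \<and> (\<forall>r\<in>rel_interior (feasible_rewards (occ_polytope P \<mu>0 \<gamma>) de).
            opt_set (occ_polytope P \<mu>0 \<gamma>) r = Fe)"
proof -
  have nn: "\<forall>d\<in>occ_polytope P \<mu>0 \<gamma>. \<forall>i. 0 \<le> d$i" by (simp add: occ_polytope_def)
  have s1: "\<forall>d\<in>occ_polytope P \<mu>0 \<gamma>. (\<Sum>i\<in>UNIV. d$i) = 1"
    using occ_sum1[OF P_sum mu_sum gamma(2)] by blast
  show ?thesis by (rule abstract_main[OF nn s1 occ_polyhedron de Fe])
qed

end
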